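(* Let $h\in\mathbb{N}$, $h'\in[h+1]$, $\ell\in\mathbb{N}$ and let $G$ be a graph. Let $T=t_1\dots t_{(h+1)\ell+h'-1}$ be the $h$-th power of a path in $G$ (each vertex adjacent to the preceding $h$ vertices), and let $W$ be a set of vertices disjoint from $T$. Let $Q_1:=\{t_1,\dots,t_{h+1}\}$, $Q_i:=\{t_{(h+1)(i-2)+1},\dots,t_{(h+1)i}\}$ for $1<i\leq\ell$, and $Q_{\ell+1}:=\{t_{(h+1)\ell-h},\dots,t_{(h+1)\ell+h'-1}\}$. If there is a permutation $\sigma$ of $[\ell+1]$ such that for each $i\in[\ell+1]$ the vertices of $Q_{\sigma(i)}$ have at least $i$ common neighbours in $W$, then there are distinct $q_1,\dots,q_{\ell+1}\in W$ such that $(q_1t_1\dots t_{h+1})(q_2t_{h+2}\dots t_{2(h+1)})\dots(q_\ell t_{(h+1)\ell-h}\dots t_{(h+1)\ell})(q_{\ell+1}t_{(h+1)\ell+1}\dots t_{(h+1)\ell+h'-1})$ is (in this order) the $(h+1)$-th power of a path in $G$, using every vertex of $T$. If instead $T=t_1\dots t_{(h+1)\ell}$ is the $h$-th power of a cycle in $G$ and we set $Q_1:=\{t_{(h+1)\ell-h},\dots,t_{(h+1)\ell},t_1,\dots,t_{h+1}\}$, $Q_i:=\{t_{(h+1)(i-2)+1},\dots,t_{(h+1)i}\}$ for $1<i\leq\ell$, and there is a permutation $\sigma$ of $[\ell]$ such that for each $i\in[\ell]$ the vertices of $Q_{\sigma(i)}$ have at least $i$ common neighbours in $W$, then $G$ contains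 the $(h+1)$-th power of a cycle $C^{h+1}_{(h+2)\ell}$ (obtained by inserting distinct vertices $q_1,\dots,q_\ell\in W$ before each block $t_{(h+1)(i-1)+1}\dots t_{(h+1)i}$).
   Context: The $h$-th power of a path (cycle) $v_1\dots v_s$ is the graph on these vertices in which $v_i,v_j$ are adjacent whenever their distance along the path (cycle) is at most $h$. $C^{h+1}_{s}$ denotes the $(h+1)$-th power of a cycle on $s$ vertices. *)

theory Defs
  imports Main
begin

definition simple_graph :: "('a \<Rightarrow> 'a \<Rightarrow> bool) \<Rightarrow> bool" where
  "simple_graph E \<longleftrightarrow> (\<forall>u v. E u v \<longrightarrow> E v u) \<and> (\<forall>v. \<not> E v v)"

definition path_power :: "('a \<Rightarrow> 'a \<Rightarrow> bool) \<Rightarrow> nat \<Rightarrow> 'a list \<Rightarrow> bool" where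
  "path_power E h xs \<longleftrightarrow> distinct xs \<and>
     (\<forall>i j. i < j \<and> j < length xs \<and> j - i \<le> h \<longrightarrow> E (xs ! i) (xs ! j))"

definition cycle_power :: "('a \<Rightarrow> 'a \<Rightarrow> bool) \<Rightarrow> nat \<Rightarrow> 'a list \<Rightarrow> bool" where
  "cycle_power E h xs \<longleftrightarrow> distinct xs \<and>
     (\<forall>i j. i < j \<and> j < length xs \<and> min (j - i) (length xs - (j - i)) \<le> h
        \<longrightarrow> E (xs ! i) (xs ! j))"

text \<open>Vertices t_a, ..., t_b of a list t (1-indexed).\<close>
definition seg :: "'a list \<Rightarrow> nat \<Rightarrow> nat \<Rightarrow> 'a set" where
  "seg t a b = {t ! (k - 1) | k. a \<le> k \<and> k \<le> b}"

definition common_nbrs :: "('a \<Rightarrow> 'a \<Rightarrow> bool) \<Rightarrow> 'a set \<Rightarrow> 'a set \<Rightarrow> 'a set" where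
  "common_nbrs E W Q = {w \<in> W. \<forall>v \<in> Q. E v w}"

definition Qpath :: "nat \<Rightarrow> nat \<Rightarrow> nat \<Rightarrow> 'a list \<Rightarrow> nat \<Rightarrow> 'a set" where
  "Qpath h h' l t i =
     (if i = 1 then seg t 1 (h + 1)
      else if i \<le> l then seg t ((h + 1) * (i - 2) + 1) ((h + 1) * i)
      else seg t ((h + 1) * l - h) ((h + 1) * l + h' - 1))"

definition Qcyc :: "nat \<Rightarrow> nat \<Rightarrow> 'a list \<Rightarrow> nat \<Rightarrow> 'a set" where
  "Qcyc h l t i =
     (if i = 1 then seg t ((h + 1) * l - h) ((h + 1) * l) \<union> seg t 1 (h + 1)
      else seg t ((h + 1) * (i - 2) + 1) ((h + 1) * i))"

text \<open>Block i (0-indexed) of length h+1: t_{(h+1)i+1} ... t_{(h+1)(i+1)}.\<close>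
definition block :: "nat \<Rightarrow> 'a list \<Rightarrow> nat \<Rightarrow> 'a list" where
  "block h t i = take (h + 1) (drop ((h + 1) * i) t)"

end

theory Submission
  imports Defs
begin

lemma len_concat_const:
  "\<forall>i<n. length (g i) = c \<Longrightarrow> length (concat (map g [0..<n])) = c*n"
  by (induction n) auto

lemma nth_concat_const:
  assumes "\<forall>i<n. length (g i) = c" "k < n" "r < c"
  shows "concat (map g [0..<n]) ! (c*k + r) = g k ! r"
  using assms
proof (induction n arbitrary: k)
  case 0 then show ?case by simp
next
  case (Suc n)
  have L: "length (concat (map g [0..<n])) = c*n"
    using Suc.prems(1) by (intro len_concat_const) auto
  show ?case
  proof (cases "k < n")
    case True
    have "c*k + r < c*n"
    proof -
      have "c*(k+1) \<le> c*n" using True by (intro mult_le_mono2) simp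
      then show ?thesis using Suc.prems(3) by simp
    qed
    then show ?thesis using Suc True L by (simp add: nth_append)
  next
    case False
    then have "k = n" using Suc.prems(2) by simp
    then show ?thesis using L by (simp add: nth_append)
  qed
qed

lemma divmod_uniq:
  fixes c k k' r r' :: nat
  assumes "c*k + r = c*k' + r'" "r < c" "r' < c"
  shows "k = k' \<and> r = r'"
proof -
  have "(c*k + r) div c = k" "(c*k' + r') div c = k'" using assms(2,3) by auto
  moreover have "(c*k + r) mod c = r" "(c*k' + r') mod c = r'" using assms(2,3) by auto
  ultimately show ?thesis using assms(1) by (metis (no_types))
qed

lemma greedy:
  fixes B :: "nat \<Rightarrow> 'a set"
  assumes "\<forall>i\<in>{1..n}. finite (B i) \<and> card (B i) \<ge> i"
  shows "\<exists>g. inj_on g {1..n} \<and> (\<forall>i\<in>{1..n}. g i \<in> B i)"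
  using assms
proof (induction n)
  case 0 then show ?case by simp
next
  case (Suc n)
  have "\<forall>i\<in>{1..n}. finite (B i) \<and> card (B i) \<ge> i" using Suc.prems by simp
  then obtain g where g: "inj_on g {1..n}" "\<forall>i\<in>{1..n}. g i \<in> B i" using Suc.IH by blast
  have c1: "card (g ` {1..n}) \<le> n" using card_image_le[of "{1..n}" g] by simp
  have c2: "card (B (Suc n)) \<ge> Suc n" "finite (B (Suc n))" using Suc.prems by auto
  have "\<not> B (Suc n) \<subseteq> g ` {1..n}"
  proof
    assume "B (Suc n) \<subseteq> g ` {1..n}"
    then have "card (B (Suc n)) \<le> card (g ` {1..n})" by (intro card_mono) auto
    then show False using c1 c2 by simp
  qed
  then obtain x where x: "x \<in> B (Suc n)" "x \<notin> g ` {1..n}" by blast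
  let ?g = "g(Suc n := x)"
  have eq: "{1..Suc n} = insert (Suc n) {1..n}" by auto
  have i1: "inj_on ?g {1..n}"
  proof (rule inj_onI)
    fix a b assume a: "a \<in> {1..n}" and b: "b \<in> {1..n}" and e: "?g a = ?g b"
    have "a \<noteq> Suc n" "b \<noteq> Suc n" using a b by auto
    then have "g a = g b" using e by simp
    then show "a = b" using g(1) a b by (meson inj_onD)
  qed
  have i2: "?g (Suc n) \<notin> ?g ` ({1..n} - {Suc n})" using x(2) by simp
  have "inj_on ?g {1..Suc n}" unfolding eq using i1 i2 by simp
  moreover have "\<forall>i\<in>{1..Suc n}. ?g i \<in> B i" using g(2) x(1) unfolding eq by simp
  ultimately show ?case by blast
qed

lemma greedy_perm:
  fixes A :: "nat \<Rightarrow> 'a set"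
  assumes bij: "bij_betw \<sigma> {1..n} {1..n}" and c: "\<forall>i\<in>{1..n}. card (A (\<sigma> i)) \<ge> i"
    and fin: "\<forall>j. finite (A j)"
  shows "\<exists>qs. length qs = n \<and> distinct qs \<and> (\<forall>k<n. qs ! k \<in> A (k+1))"
proof -
  obtain g where g: "inj_on g {1..n}" "\<forall>i\<in>{1..n}. g i \<in> A (\<sigma> i)"
    using greedy[of n "\<lambda>i. A (\<sigma> i)"] c fin by auto
  define f where "f = g \<circ> inv_into {1..n} \<sigma>"
  have bi: "bij_betw (inv_into {1..n} \<sigma>) {1..n} {1..n}" using bij by (rule bij_betw_inv_into)
  have finj: "inj_on f {1..n}" unfolding f_def
    using bi g(1) by (metis bij_betw_def comp_inj_on)
  have fA: "f j \<in> A j" if "j \<in> {1..n}" for j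
  proof -
    have i1: "inv_into {1..n} \<sigma> j \<in> {1..n}" using bi that by (meson bij_betwE)
    have i2: "\<sigma> (inv_into {1..n} \<sigma> j) = j" using bij that by (meson bij_betw_inv_into_right)
    have "g (inv_into {1..n} \<sigma> j) \<in> A (\<sigma> (inv_into {1..n} \<sigma> j))" using g(2) i1 by blast
    then show ?thesis using i2 unfolding f_def by simp
  qed
  define qs where "qs = map (\<lambda>k. f (k+1)) [0..<n]"
  have "inj_on (\<lambda>k. f (k+1)) {0..<n}"
  proof (rule inj_onI)
    fix x y assume "x \<in> {0..<n}" "y \<in> {0..<n}" "f (x+1) = f (y+1)"
    then have "x + 1 = y + 1" using finj unfolding inj_on_def by (metis atLeastAtMost_iff atLeastLessThan_iff le_add2 Suc_leI Suc_eq_plus1)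
    then show "x = y" by simp
  qed
  then have "distinct qs" unfolding qs_def by (simp add: distinct_map)
  moreover have "\<forall>k<n. qs ! k \<in> A (k+1)" unfolding qs_def using fA by simp
  moreover have "length qs = n" unfolding qs_def by simp
  ultimately show ?thesis by blast
qed

lemma block_len: "(h+1)*(i+1) \<le> length t \<Longrightarrow> length (block h t i) = h+1"
  unfolding block_def by simp

lemma block_nth: "(h+1)*(i+1) \<le> length t \<Longrightarrow> r < h+1 \<Longrightarrow> block h t i ! r = t ! ((h+1)*i + r)"
  unfolding block_def by (simp add: nth_take nth_drop)

lemma glen:
  assumes "(h+1)*l \<le> length t"
  shows "\<forall>i<l. length (qs ! i # block h t i) = h+2"
proof (intro allI impI)
  fix i assume "i < l"
  then have "(h+1)*(i+1) \<le> (h+1)*l" by (intro mult_le_mono2) simp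
  then show "length (qs ! i # block h t i) = h+2" using assms block_len[of h i t] by simp
qed

lemma cyc_nth:
  assumes "(h+1)*l \<le> length t" "k < l" "r < h+2"
  shows "concat (map (\<lambda>i. qs ! i # block h t i) [0..<l]) ! ((h+2)*k+r)
          = (if r = 0 then qs ! k else t ! ((h+1)*k + r - 1))"
proof -
  have "concat (map (\<lambda>i. qs ! i # block h t i) [0..<l]) ! ((h+2)*k+r) = (qs ! k # block h t k) ! r"
    using nth_concat_const[OF glen[OF assms(1)] assms(2,3)] .
  moreover have "(h+1)*(k+1) \<le> length t"
  proof -
    have "(h+1)*(k+1) \<le> (h+1)*l" using assms(2) by (intro mult_le_mono2) simp
    then show ?thesis using assms(1) by simp
  qed
  ultimately show ?thesis using assms(3) by (cases r) (auto simp: block_nth)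
qed

lemma cyc_len:
  assumes "(h+1)*l \<le> length t"
  shows "length (concat (map (\<lambda>i. qs ! i # block h t i) [0..<l])) = (h+2)*l"
  using len_concat_const[OF glen[OF assms]] .

lemma path_nth:
  assumes "length t = (h+1)*l + h' - 1" "1 \<le> h'" "r < h+2" "(h+2)*k + r < (h+2)*l + h'" "h' \<le> h+1"
  shows "(concat (map (\<lambda>i. qs ! i # block h t i) [0..<l]) @ (qs ! l # drop ((h + 1) * l) t)) ! ((h+2)*k+r)
          = (if r = 0 then qs ! k else t ! ((h+1)*k + r - 1))"
proof -
  have lt: "(h+1)*l \<le> length t" using assms by simp
  show ?thesis
  proof (cases "k < l")
    case True
    have "(h+2)*(k+1) \<le> (h+2)*l" using True by (intro mult_le_mono2) simp
    then have "(h+2)*k+r < (h+2)*l" using assms(3) by simp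
    then show ?thesis using cyc_nth[OF lt True assms(3), of qs] cyc_len[OF lt, of qs]
      by (simp add: nth_append)
  next
    case False
    have "k < l + 1"
    proof (rule ccontr)
      assume "\<not> k < l+1"
      then have "(h+2)*(l+1) \<le> (h+2)*k" by (intro mult_le_mono2) simp
      then show False using assms(4) assms(5) by simp
    qed
    then have k: "k = l" using False by simp
    then have "r < h'" using assms(4) by simp
    then show ?thesis using k cyc_len[OF lt, of qs] assms(1)
      by (cases r) (auto simp: nth_append)
  qed
qed

lemma path_len:
  assumes "length t = (h+1)*l + h' - 1" "1 \<le> h'"
  shows "length (concat (map (\<lambda>i. qs ! i # block h t i) [0..<l]) @ (qs ! l # drop ((h + 1) * l) t)) = (h+2)*l + h'"
proof -
  have lt: "(h+1)*l \<le> length t" using assms by simp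
  show ?thesis using cyc_len[OF lt, of qs] assms by simp
qed

lemma decomp:
  fixes i c :: nat assumes "0 < c"
  obtains k r where "i = c*k + r" "r < c"
  using assms by (metis div_mult_mod_eq mod_less_divisor mult.commute)

lemma distinct_gen:
  assumes len: "length X = N"
    and nth: "\<forall>k r. r < h+2 \<longrightarrow> (h+2)*k+r < N \<longrightarrow> X ! ((h+2)*k+r) = (if r = 0 then qs ! k else t ! ((h+1)*k + r - 1))"
    and bnd: "\<forall>k r. r < h+2 \<longrightarrow> (h+2)*k+r < N \<longrightarrow> k < length qs \<and> (0 < r \<longrightarrow> (h+1)*k + r - 1 < length t)"
    and dq: "distinct qs" and dt: "distinct t" and disj: "set qs \<inter> set t = {}"
  shows "distinct X"
  unfolding distinct_conv_nth
proof (intro allI impI)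
  fix i j assume i: "i < length X" and j: "j < length X" and ij: "i \<noteq> j"
  obtain k r where kr: "i = (h+2)*k + r" "r < h+2" using decomp[of "h+2" i] by auto
  obtain k' r' where kr': "j = (h+2)*k' + r'" "r' < h+2" using decomp[of "h+2" j] by auto
  have Xi: "X ! i = (if r = 0 then qs ! k else t ! ((h+1)*k + r - 1))" using nth kr i len by auto
  have Xj: "X ! j = (if r' = 0 then qs ! k' else t ! ((h+1)*k' + r' - 1))" using nth kr' j len by auto
  have bi: "k < length qs \<and> (0 < r \<longrightarrow> (h+1)*k + r - 1 < length t)" using bnd kr i len by auto
  have bj: "k' < length qs \<and> (0 < r' \<longrightarrow> (h+1)*k' + r' - 1 < length t)" using bnd kr' j len by auto
  show "X ! i \<noteq> X ! j"
  proof (cases "r = 0"; cases "r' = 0")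
    assume "r = 0" "r' = 0"
    then show ?thesis using Xi Xj bi bj dq ij kr kr' by (auto simp: nth_eq_iff_index_eq)
  next
    assume "r = 0" "r' \<noteq> 0"
    then show ?thesis using Xi Xj bi bj disj by (auto dest!: nth_mem)
  next
    assume "r \<noteq> 0" "r' = 0"
    then show ?thesis using Xi Xj bi bj disj by (auto dest!: nth_mem)
  next
    assume r: "r \<noteq> 0" "r' \<noteq> 0"
    show ?thesis
    proof
      assume "X ! i = X ! j"
      then have "t ! ((h+1)*k + (r - 1)) = t ! ((h+1)*k' + (r' - 1))" using Xi Xj r by simp
      then have "(h+1)*k + (r - 1) = (h+1)*k' + (r' - 1)"
        using bi bj r dt by (simp add: nth_eq_iff_index_eq)
      then have "k = k' \<and> r - 1 = r' - 1" using kr(2) kr'(2) r divmod_uniq[of "h+1" k "r-1" k' "r'-1"] by auto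
      then show False using r ij kr kr' by auto
    qed
  qed
qed

lemma adj_core:
  assumes Ht: "\<forall>a a'. a < a' \<longrightarrow> a' < length t \<longrightarrow> a' - a \<le> h \<longrightarrow> E (t!a) (t!a')"
    and Hq: "\<forall>k a. k \<le> K \<longrightarrow> (h+1)*k - (h+1) \<le> a \<longrightarrow> a < (h+1)*(k+1) \<longrightarrow> a < length t \<longrightarrow> E (t!a) (qs!k)"
    and sym: "\<forall>u v. E u v \<longrightarrow> E v u"
    and r: "r < h+2" and r': "r' < h+2"
    and lt: "(h+2)*k+r < (h+2)*k'+r'" and d: "(h+2)*k'+r' - ((h+2)*k+r) \<le> h+1"
    and kK: "k' \<le> K"
    and b': "0<r' \<longrightarrow> (h+1)*k'+r'-1 < length t" and b: "0<r \<longrightarrow> (h+1)*k+r-1 < length t"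
  shows "E (if r = 0 then qs ! k else t ! ((h+1)*k + r - 1)) (if r' = 0 then qs ! k' else t ! ((h+1)*k' + r' - 1))"
proof -
  have k1: "k \<le> k'"
  proof (rule ccontr)
    assume "\<not> k \<le> k'"
    then have "(h+2)*(k'+1) \<le> (h+2)*k" by (intro mult_le_mono2) simp
    then show False using lt r' by simp
  qed
  have k2: "k' < k + 2"
  proof (rule ccontr)
    assume "\<not> k' < k+2"
    then have "(h+2)*(k+2) \<le> (h+2)*k'" by (intro mult_le_mono2) simp
    then show False using d r lt by simp
  qed
  have kk: "k' = k \<or> k' = k+1" using k1 k2 by auto
  show ?thesis
  proof (cases "r = 0"; cases "r' = 0")
    assume "r = 0" "r' = 0"
    then show ?thesis using kk lt d by auto
  next
    assume a: "r = 0" "r' \<noteq> 0"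
    then have "k' = k" using kk d r' by auto
    then have "E (t ! ((h+1)*k + r' - 1)) (qs ! k)"
      using Hq kK a b' r' by simp
    then show ?thesis using a sym \<open>k' = k\<close> by simp
  next
    assume a: "r \<noteq> 0" "r' = 0"
    then have kk': "k' = k+1" using kk lt by auto
    have "E (t ! ((h+1)*k + r - 1)) (qs ! (k+1))"
      using Hq[rule_format, of "k+1" "(h+1)*k + r - 1"] kK kk' a b r by simp
    then show ?thesis using a kk' by simp
  next
    assume a: "r \<noteq> 0" "r' \<noteq> 0"
    have "E (t ! ((h+1)*k + r - 1)) (t ! ((h+1)*k' + r' - 1))"
      using kk
    proof
      assume "k' = k" then show ?thesis
        using Ht[rule_format, of "(h+1)*k + r - 1" "(h+1)*k' + r' - 1"] a lt b' r' by auto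
    next
      assume "k' = k+1" then show ?thesis using Ht a lt d b' r by auto
    qed
    then show ?thesis using a by simp
  qed
qed

lemma adj_wrap:
  assumes Ht: "\<forall>a a'. a < a' \<longrightarrow> a' < length t \<longrightarrow> min (a' - a) (length t - (a' - a)) \<le> h \<longrightarrow> E (t!a) (t!a')"
    and Hq0: "\<forall>a. (h+1)*m \<le> a \<longrightarrow> a < (h+1)*(m+1) \<longrightarrow> E (t!a) (qs!0)"
    and sym: "\<forall>u v. E u v \<longrightarrow> E v u"
    and len: "length t = (h+1)*(m+1)"
    and r: "r < h+2" and r': "r' < h+2" and k: "k < m+1" and k': "k' < m+1"
    and lt: "(h+2)*k+r < (h+2)*k'+r'" and d: "(h+2)*(m+1) - ((h+2)*k'+r' - ((h+2)*k+r)) \<le> h+1"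
  shows "E (if r = 0 then qs ! k else t ! ((h+1)*k + r - 1)) (if r' = 0 then qs ! k' else t ! ((h+1)*k' + r' - 1))"
proof -
  have k0: "k = 0"
  proof (rule ccontr)
    assume "k \<noteq> 0"
    have "(h+2)*(k'+1) \<le> (h+2)*(m+1)" using k' by (intro mult_le_mono2) simp
    moreover have "(h+2)*1 \<le> (h+2)*k" using \<open>k \<noteq> 0\<close> by (intro mult_le_mono2) simp
    ultimately show False using d r' by simp
  qed
  have km: "k' = m"
  proof (rule ccontr)
    assume "k' \<noteq> m"
    then have "(h+2)*(k'+1) \<le> (h+2)*m" using k' by (intro mult_le_mono2) simp
    then show False using d r' k0 by simp
  qed
  have rr: "r < r'" using d k0 km r' by simp
  show ?thesis
  proof (cases "r = 0")
    case True
    have "E (t ! ((h+1)*m + r' - 1)) (qs ! 0)" using Hq0 rr r' by simp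
    then show ?thesis using True rr sym k0 km by auto
  next
    case False
    have "E (t ! (r - 1)) (t ! ((h+1)*m + r' - 1))"
      using Ht[rule_format, of "r - 1" "(h+1)*m + r' - 1"] False rr r' len by simp
    then show ?thesis using False rr k0 km by simp
  qed
qed

lemma seg_mem: "a \<le> x + 1 \<Longrightarrow> x + 1 \<le> b \<Longrightarrow> t ! x \<in> seg t a b"
  unfolding seg_def by (rule CollectI, rule exI[of _ "x+1"]) simp

lemma Qpath_mem:
  assumes "l \<ge> 1" "length t = (h+1)*l + h' - 1" "k \<le> l" "(h+1)*k - (h+1) \<le> a" "a < (h+1)*(k+1)" "a < length t"
  shows "t ! a \<in> Qpath h h' l t (k+1)"
proof -
  consider "k = 0" | "k \<ge> 1" "k + 1 \<le> l" | "k = l" "k \<ge> 1" using assms by linarith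
  then show ?thesis
  proof cases
    case 1 then show ?thesis using assms by (simp add: Qpath_def seg_mem)
  next
    case 2
    have "(h+1)*(k+1-2) = (h+1)*k - (h+1)" by (simp add: diff_mult_distrib2)
    then show ?thesis using 2 assms unfolding Qpath_def by (auto intro!: seg_mem)
  next
    case 3
    have "(h+1)*1 \<le> (h+1)*l" using assms(1) by (intro mult_le_mono2) simp
    then have "(h+1)*l \<ge> h+1" by simp
    then show ?thesis using 3 assms unfolding Qpath_def by (auto intro!: seg_mem)
  qed
qed

lemma Qcyc_mem:
  assumes "k < l" "(h+1)*k - (h+1) \<le> a" "a < (h+1)*(k+1)"
  shows "t ! a \<in> Qcyc h l t (k+1)"
proof (cases "k = 0")
  case True then show ?thesis using assms by (simp add: Qcyc_def seg_mem)
next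
  case False
  have "(h+1)*(k+1-2) = (h+1)*k - (h+1)" by (simp add: diff_mult_distrib2)
  then show ?thesis using False assms unfolding Qcyc_def by (auto intro!: seg_mem)
qed

lemma Qcyc_mem0:
  assumes "l = m + 1" "(h+1)*m \<le> a" "a < (h+1)*(m+1)"
  shows "t ! a \<in> Qcyc h l t 1"
  using assms unfolding Qcyc_def by (auto intro!: seg_mem)

lemma path_bnd:
  assumes "length t = (h+1)*l + h' - 1" "1 \<le> h'" "h' \<le> h+1" "r < h+2" "(h+2)*k + r < (h+2)*l + h'"
  shows "k \<le> l \<and> (0 < r \<longrightarrow> (h+1)*k + r - 1 < length t)"
proof -
  have kl: "k < l + 1"
  proof (rule ccontr)
    assume "\<not> k < l+1"
    then have "(h+2)*(l+1) \<le> (h+2)*k" by (intro mult_le_mono2) simp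
    then show False using assms by simp
  qed
  show ?thesis
  proof (cases "k < l")
    case True
    have "(h+1)*(k+1) \<le> (h+1)*l" using True by (intro mult_le_mono2) simp
    then have "(h+1)*k + (h+1) \<le> length t" using assms(1,2) by simp
    then have "0 < r \<longrightarrow> (h+1)*k + r - 1 < length t" using assms(4) by linarith
    then show ?thesis using True by simp
  next
    case False
    then have kl: "k = l" using kl by simp
    then have "r < h'" using assms(5) by simp
    then have "0 < r \<longrightarrow> (h+1)*k + r - 1 < length t" using assms(1) kl by (simp add: algebra_simps) linarith
    then show ?thesis using kl by simp
  qed
qed

lemma cyc_bnd:
  assumes "length t = (h+1)*l" "r < h+2" "(h+2)*k + r < (h+2)*l"
  shows "k < l \<and> (0 < r \<longrightarrow> (h+1)*k + r - 1 < length t)"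
proof -
  have kl: "k < l"
  proof (rule ccontr)
    assume "\<not> k < l"
    then have "(h+2)*l \<le> (h+2)*k" by (intro mult_le_mono2) simp
    then show False using assms by simp
  qed
  have "(h+1)*(k+1) \<le> (h+1)*l" using kl by (intro mult_le_mono2) simp
  then have "(h+1)*k + (h+1) \<le> length t" using assms(1) by simp
  then have "0 < r \<longrightarrow> (h+1)*k + r - 1 < length t" using assms(2) by linarith
  then show ?thesis using kl by simp
qed

theorem lemma7p1:
  fixes E :: "'a::finite \<Rightarrow> 'a \<Rightarrow> bool" and h l :: nat
  assumes G: "simple_graph E" and l: "l \<ge> 1"
  shows
   "(\<forall>(h'::nat) (t::'a list) (W::'a set) (\<sigma>::nat \<Rightarrow> nat).
       h' \<in> {1..h + 1} \<and> length t = (h + 1) * l + h' - 1 \<and> path_power E h t \<and>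
       W \<inter> set t = {} \<and> bij_betw \<sigma> {1..l + 1} {1..l + 1} \<and>
       (\<forall>i \<in> {1..l + 1}. card (common_nbrs E W (Qpath h h' l t (\<sigma> i))) \<ge> i)
     \<longrightarrow> (\<exists>qs. length qs = l + 1 \<and> distinct qs \<and> set qs \<subseteq> W \<and>
            path_power E (h + 1)
              (concat (map (\<lambda>i. qs ! i # block h t i) [0..<l]) @
               (qs ! l # drop ((h + 1) * l) t))))
   \<and>
   (\<forall>(t::'a list) (W::'a set) (\<sigma>::nat \<Rightarrow> nat).
       length t = (h + 1) * l \<and> cycle_power E h t \<and>
       W \<inter> set t = {} \<and> bij_betw \<sigma> {1..l} {1..l} \<and>
       (\<forall>i \<in> {1..l}. card (common_nbrs E W (Qcyc h l t (\<sigma> i))) \<ge> i)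
     \<longrightarrow> (\<exists>qs. length qs = l \<and> distinct qs \<and> set qs \<subseteq> W \<and>
            cycle_power E (h + 1) (concat (map (\<lambda>i. qs ! i # block h t i) [0..<l]))))"
proof (intro conjI allI impI; elim conjE)
  have sym: "\<forall>u v. E u v \<longrightarrow> E v u" using G unfolding simple_graph_def by blast
  {
    fix h' t W and \<sigma> :: "nat \<Rightarrow> nat"
    assume h': "h' \<in> {1..h + 1}" and len: "length t = (h + 1) * l + h' - 1" and pp: "path_power E h t"
      and disj: "W \<inter> set t = {}" and bij: "bij_betw \<sigma> {1..l + 1} {1..l + 1}"
      and cd: "\<forall>i \<in> {1..l + 1}. card (common_nbrs E W (Qpath h h' l t (\<sigma> i))) \<ge> i"
    have h1: "1 \<le> h'" "h' \<le> h+1" using h' by auto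
    obtain qs where qs: "length qs = l+1" "distinct qs"
        "\<forall>k<l+1. qs ! k \<in> common_nbrs E W (Qpath h h' l t (k+1))"
      using greedy_perm[OF bij cd] by auto
    have sW: "set qs \<subseteq> W" using qs unfolding common_nbrs_def
      by (auto simp: in_set_conv_nth)
    have dt: "distinct t" and Ht: "\<forall>a a'. a < a' \<longrightarrow> a' < length t \<longrightarrow> a' - a \<le> h \<longrightarrow> E (t!a) (t!a')"
      using pp unfolding path_power_def by auto
    have Hq: "\<forall>k a. k \<le> l \<longrightarrow> (h+1)*k - (h+1) \<le> a \<longrightarrow> a < (h+1)*(k+1) \<longrightarrow> a < length t \<longrightarrow> E (t!a) (qs!k)"
    proof (intro allI impI)
      fix k a assume a: "k \<le> l" "(h+1)*k - (h+1) \<le> a" "a < (h+1)*(k+1)" "a < length t"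
      have "t ! a \<in> Qpath h h' l t (k+1)" using Qpath_mem[OF l len a] .
      moreover have "qs ! k \<in> common_nbrs E W (Qpath h h' l t (k+1))" using qs a by auto
      ultimately show "E (t!a) (qs!k)" unfolding common_nbrs_def by auto
    qed
    define X where "X = concat (map (\<lambda>i. qs ! i # block h t i) [0..<l]) @ (qs ! l # drop ((h + 1) * l) t)"
    have lenX: "length X = (h+2)*l + h'" unfolding X_def using path_len[OF len h1(1)] .
    have nthX: "\<forall>k r. r < h+2 \<longrightarrow> (h+2)*k+r < (h+2)*l + h' \<longrightarrow> X ! ((h+2)*k+r) = (if r = 0 then qs ! k else t ! ((h+1)*k + r - 1))"
      unfolding X_def using path_nth[OF len h1(1) _ _ h1(2)] by blast
    have bnd: "\<forall>k r. r < h+2 \<longrightarrow> (h+2)*k+r < (h+2)*l + h' \<longrightarrow> k \<le> l \<and> (0 < r \<longrightarrow> (h+1)*k + r - 1 < length t)"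
      using path_bnd[OF len h1] by blast
    have bnd2: "\<forall>k r. r < h+2 \<longrightarrow> (h+2)*k+r < (h+2)*l + h' \<longrightarrow> k < length qs \<and> (0 < r \<longrightarrow> (h+1)*k + r - 1 < length t)"
      using bnd qs(1) by (metis less_Suc_eq_le Suc_eq_plus1)
    have "set qs \<inter> set t = {}" using sW disj by blast
    then have "distinct X"
      using distinct_gen[OF lenX nthX bnd2 qs(2) dt] by blast
    moreover have "E (X ! i) (X ! j)" if ij: "i < j" "j < length X" "j - i \<le> h + 1" for i j
    proof -
      obtain k r where kr: "i = (h+2)*k + r" "r < h+2" using decomp[of "h+2" i] by auto
      obtain k' r' where kr': "j = (h+2)*k' + r'" "r' < h+2" using decomp[of "h+2" j] by auto
      have b: "k \<le> l \<and> (0 < r \<longrightarrow> (h+1)*k + r - 1 < length t)" using bnd kr ij lenX by auto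
      have b': "k' \<le> l \<and> (0 < r' \<longrightarrow> (h+1)*k' + r' - 1 < length t)" using bnd kr' ij lenX by auto
      have lt: "(h+2)*k+r < (h+2)*k'+r'" using ij kr kr' by simp
      have d: "(h+2)*k'+r' - ((h+2)*k+r) \<le> h+1" using ij kr kr' by simp
      have "E (if r = 0 then qs ! k else t ! ((h+1)*k + r - 1)) (if r' = 0 then qs ! k' else t ! ((h+1)*k' + r' - 1))"
        using adj_core[OF Ht Hq sym kr(2) kr'(2) lt d conjunct1[OF b'] conjunct2[OF b'] conjunct2[OF b]] .
      moreover have "X ! i = (if r = 0 then qs ! k else t ! ((h+1)*k + r - 1))"
        using nthX[rule_format, of r k] kr ij lenX by simp
      moreover have "X ! j = (if r' = 0 then qs ! k' else t ! ((h+1)*k' + r' - 1))"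
        using nthX[rule_format, of r' k'] kr' ij lenX by simp
      ultimately show ?thesis by simp
    qed
    ultimately have "path_power E (h+1) X" unfolding path_power_def by auto
    then show "\<exists>qs. length qs = l + 1 \<and> distinct qs \<and> set qs \<subseteq> W \<and>
            path_power E (h + 1)
              (concat (map (\<lambda>i. qs ! i # block h t i) [0..<l]) @
               (qs ! l # drop ((h + 1) * l) t))"
      using qs sW unfolding X_def by blast
  }
  {
    fix t W and \<sigma> :: "nat \<Rightarrow> nat"
    assume len: "length t = (h + 1) * l" and cp: "cycle_power E h t"
      and disj: "W \<inter> set t = {}" and bij: "bij_betw \<sigma> {1..l} {1..l}"
      and cd: "\<forall>i \<in> {1..l}. card (common_nbrs E W (Qcyc h l t (\<sigma> i))) \<ge> i"
    obtain m where m: "l = m + 1" using l by (metis le_add_diff_inverse2)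
    obtain qs where qs: "length qs = l" "distinct qs"
        "\<forall>k<l. qs ! k \<in> common_nbrs E W (Qcyc h l t (k+1))"
      using greedy_perm[OF bij cd] by auto
    have sW: "set qs \<subseteq> W" using qs unfolding common_nbrs_def
      by (auto simp: in_set_conv_nth)
    have dt: "distinct t" and Htc: "\<forall>a a'. a < a' \<longrightarrow> a' < length t \<longrightarrow> min (a' - a) (length t - (a' - a)) \<le> h \<longrightarrow> E (t!a) (t!a')"
      using cp unfolding cycle_power_def by auto
    have Ht: "\<forall>a a'. a < a' \<longrightarrow> a' < length t \<longrightarrow> a' - a \<le> h \<longrightarrow> E (t!a) (t!a')"
      using Htc by (metis min.coboundedI1)
    have Hq: "\<forall>k a. k \<le> m \<longrightarrow> (h+1)*k - (h+1) \<le> a \<longrightarrow> a < (h+1)*(k+1) \<longrightarrow> a < length t \<longrightarrow> E (t!a) (qs!k)"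
    proof (intro allI impI)
      fix k a assume a: "k \<le> m" "(h+1)*k - (h+1) \<le> a" "a < (h+1)*(k+1)" "a < length t"
      have "t ! a \<in> Qcyc h l t (k+1)" using Qcyc_mem[of k l h a t] a m by auto
      moreover have "qs ! k \<in> common_nbrs E W (Qcyc h l t (k+1))" using qs a m by auto
      ultimately show "E (t!a) (qs!k)" unfolding common_nbrs_def by auto
    qed
    have Hq0: "\<forall>a. (h+1)*m \<le> a \<longrightarrow> a < (h+1)*(m+1) \<longrightarrow> E (t!a) (qs!0)"
    proof (intro allI impI)
      fix a assume a: "(h+1)*m \<le> a" "a < (h+1)*(m+1)"
      have "t ! a \<in> Qcyc h l t 1" using Qcyc_mem0[OF m a] .
      moreover have "qs ! 0 \<in> common_nbrs E W (Qcyc h l t 1)" using qs m by auto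
      ultimately show "E (t!a) (qs!0)" unfolding common_nbrs_def by auto
    qed
    have lt: "(h+1)*l \<le> length t" using len by simp
    define X where "X = concat (map (\<lambda>i. qs ! i # block h t i) [0..<l])"
    have lenX: "length X = (h+2)*l" unfolding X_def using cyc_len[OF lt] .
    have bnd: "\<forall>k r. r < h+2 \<longrightarrow> (h+2)*k+r < (h+2)*l \<longrightarrow> k < l \<and> (0 < r \<longrightarrow> (h+1)*k + r - 1 < length t)"
      using cyc_bnd[OF len] by blast
    have nthX: "\<forall>k r. r < h+2 \<longrightarrow> (h+2)*k+r < (h+2)*l \<longrightarrow> X ! ((h+2)*k+r) = (if r = 0 then qs ! k else t ! ((h+1)*k + r - 1))"
      unfolding X_def using cyc_nth[OF lt] bnd by blast
    have bnd2: "\<forall>k r. r < h+2 \<longrightarrow> (h+2)*k+r < (h+2)*l \<longrightarrow> k < length qs \<and> (0 < r \<longrightarrow> (h+1)*k + r - 1 < length t)"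
      using bnd qs(1) by simp
    have "set qs \<inter> set t = {}" using sW disj by blast
    then have "distinct X"
      using distinct_gen[OF lenX nthX bnd2 qs(2) dt] by blast
    moreover have "E (X ! i) (X ! j)"
      if ij: "i < j" "j < length X" "min (j - i) (length X - (j - i)) \<le> h + 1" for i j
    proof -
      obtain k r where kr: "i = (h+2)*k + r" "r < h+2" using decomp[of "h+2" i] by auto
      obtain k' r' where kr': "j = (h+2)*k' + r'" "r' < h+2" using decomp[of "h+2" j] by auto
      have b: "k < l \<and> (0 < r \<longrightarrow> (h+1)*k + r - 1 < length t)" using bnd kr ij lenX by auto
      have b': "k' < l \<and> (0 < r' \<longrightarrow> (h+1)*k' + r' - 1 < length t)" using bnd kr' ij lenX by auto
      have lt: "(h+2)*k+r < (h+2)*k'+r'" using ij kr kr' by simp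
      have "E (if r = 0 then qs ! k else t ! ((h+1)*k + r - 1)) (if r' = 0 then qs ! k' else t ! ((h+1)*k' + r' - 1))"
      proof (cases "j - i \<le> h + 1")
        case True
        have d: "(h+2)*k'+r' - ((h+2)*k+r) \<le> h+1" using True kr kr' by simp
        have km: "k' \<le> m" using b' m by simp
        show ?thesis
          using adj_core[OF Ht Hq sym kr(2) kr'(2) lt d km conjunct2[OF b'] conjunct2[OF b]] .
      next
        case False
        then have "length X - (j - i) \<le> h+1" using ij(3) by linarith
        then have dw: "(h+2)*(m+1) - ((h+2)*k'+r' - ((h+2)*k+r)) \<le> h+1" using lenX kr kr' m by simp
        have lm: "length t = (h+1)*(m+1)" using len m by simp
        have k1: "k < m+1" "k' < m+1" using b b' m by simp_all
        show ?thesis using adj_wrap[OF Htc Hq0 sym lm kr(2) kr'(2) k1 lt dw] .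
      qed
      moreover have "X ! i = (if r = 0 then qs ! k else t ! ((h+1)*k + r - 1))"
        using nthX[rule_format, of r k] kr ij lenX by simp
      moreover have "X ! j = (if r' = 0 then qs ! k' else t ! ((h+1)*k' + r' - 1))"
        using nthX[rule_format, of r' k'] kr' ij lenX by simp
      ultimately show ?thesis by simp
    qed
    ultimately have "cycle_power E (h+1) X" unfolding cycle_power_def by auto
    then show "\<exists>qs. length qs = l \<and> distinct qs \<and> set qs \<subseteq> W \<and>
            cycle_power E (h + 1) (concat (map (\<lambda>i. qs ! i # block h t i) [0..<l]))"
      using qs sW unfolding X_def by blast
  }
qed

end
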